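(* Let $\phi\ge1$, let $p\in\mathbb{R}_{\ge0}^n$ be arbitrary, and let each weight $w_i$ be chosen uniformly at random from an arbitrary interval $A_i\subseteq[0,1]$ of length $1/\phi$, independently of the other weights. Let $t\ge0$. Then for every $i\in\{1,\ldots,n\}$ and every $\varepsilon\ge0$, $\Pr[\Lambda^i(t)\in(0,\varepsilon]]\le\phi\varepsilon$.
   Context: For $i\in\{1,\ldots,n\}$ and $j\in\{0,1\}$ let $\mathcal{S}^{x_i=j}=\{x\in\{0,1\}^n: x_i=j\}$. Let $x^{\star,i}$ be a solution maximizing $p^{\mathsf T}x$ over $\{x\in\mathcal{S}^{x_i=0}: w^{\mathsf T}x\le t\}$, and let $\hat{x}^i$ be a solution minimizing $w^{\mathsf T}x$ over $\{x\in\mathcal{S}^{x_i=1}: p^{\mathsf T}x>p^{\mathsf T}x^{\star,i}\}$, with $\hat{x}^i=\perp$ if this set is empty. Define $\Lambda^i(t)=w^{\mathsf T}\hat{x}^i-t$ if $\hat{x}^i\ne\perp$ and $\Lambda^i(t)=\infty$ otherwise. *)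

theory Defs
  imports "HOL-Probability.Probability"
begin

text \<open>0/1 vectors of length n, indexed 0..n-1, extended by 0 outside.\<close>
definition binvecs :: "nat \<Rightarrow> (nat \<Rightarrow> real) set" where
  "binvecs n = {x. (\<forall>j<n. x j \<in> {0,1}) \<and> (\<forall>j\<ge>n. x j = 0)}"

definition dotp :: "nat \<Rightarrow> (nat \<Rightarrow> real) \<Rightarrow> (nat \<Rightarrow> real) \<Rightarrow> real" where
  "dotp n u x = (\<Sum>j<n. u j * x j)"

definition fixset :: "nat \<Rightarrow> nat \<Rightarrow> real \<Rightarrow> (nat \<Rightarrow> real) set" where
  "fixset n i b = {x \<in> binvecs n. x i = b}"

definition xstar :: "nat \<Rightarrow> (nat \<Rightarrow> real) \<Rightarrow> (nat \<Rightarrow> real) \<Rightarrow> real \<Rightarrow> nat \<Rightarrow> (nat \<Rightarrow> real)" where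
  "xstar n p w t i = (SOME x. x \<in> {y \<in> fixset n i 0. dotp n w y \<le> t} \<and>
      (\<forall>y \<in> {y \<in> fixset n i 0. dotp n w y \<le> t}. dotp n p y \<le> dotp n p x))"

definition hatset :: "nat \<Rightarrow> (nat \<Rightarrow> real) \<Rightarrow> (nat \<Rightarrow> real) \<Rightarrow> real \<Rightarrow> nat \<Rightarrow> (nat \<Rightarrow> real) set" where
  "hatset n p w t i = {x \<in> fixset n i 1. dotp n p x > dotp n p (xstar n p w t i)}"

text \<open>\<hat>x^i: a solution minimizing w^T x over hatset (only meaningful if hatset nonempty)\<close>
definition xhat :: "nat \<Rightarrow> (nat \<Rightarrow> real) \<Rightarrow> (nat \<Rightarrow> real) \<Rightarrow> real \<Rightarrow> nat \<Rightarrow> (nat \<Rightarrow> real)" where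
  "xhat n p w t i = (SOME x. x \<in> hatset n p w t i \<and>
      (\<forall>y \<in> hatset n p w t i. dotp n w x \<le> dotp n w y))"

text \<open>\<Lambda>^i(t), with \<open>\<infinity>\<close> when \<hat>x^i = \<bottom>\<close>
definition Lambda :: "nat \<Rightarrow> (nat \<Rightarrow> real) \<Rightarrow> (nat \<Rightarrow> real) \<Rightarrow> real \<Rightarrow> nat \<Rightarrow> ereal" where
  "Lambda n p w t i = (if hatset n p w t i = {} then \<infinity>
      else ereal (dotp n w (xhat n p w t i) - t))"

end

theory Submission
  imports Defs
begin

lemma dotp_upd:
  assumes "i < n"
  shows "dotp n (w(i:=v)) z = dotp n (w(i:=0)) z + v * z i"
proof -
  have "dotp n (w(i:=v)) z = (\<Sum>j\<in>insert i ({..<n}-{i}). (w(i:=v)) j * z j)"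
    unfolding dotp_def using assms by (simp add: insert_absorb)
  also have "\<dots> = v * z i + (\<Sum>j\<in>{..<n}-{i}. w j * z j)"
    by (subst sum.insert) (auto intro!: sum.cong)
  finally have A: "dotp n (w(i:=v)) z = v * z i + (\<Sum>j\<in>{..<n}-{i}. w j * z j)" .
  have "dotp n (w(i:=0)) z = (\<Sum>j\<in>insert i ({..<n}-{i}). (w(i:=0)) j * z j)"
    unfolding dotp_def using assms by (simp add: insert_absorb)
  also have "\<dots> = (\<Sum>j\<in>{..<n}-{i}. w j * z j)"
    by (subst sum.insert) (auto intro!: sum.cong)
  finally show ?thesis using A by simp
qed

lemma xstar_upd:
  assumes "i < n"
  shows "xstar n p (w(i:=v)) t i = xstar n p (w(i:=0)) t i"
proof -
  have "{y \<in> fixset n i 0. dotp n (w(i:=v)) y \<le> t} = {y \<in> fixset n i 0. dotp n (w(i:=0)) y \<le> t}"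
    using dotp_upd[OF assms, of w v] by (auto simp: fixset_def)
  then show ?thesis unfolding xstar_def by simp
qed

lemma hatset_upd:
  assumes "i < n"
  shows "hatset n p (w(i:=v)) t i = hatset n p (w(i:=0)) t i"
  unfolding hatset_def by (subst xstar_upd[OF assms, of p w v t]) (rule refl)

lemma xhat_upd:
  assumes "i < n"
  shows "xhat n p (w(i:=v)) t i = xhat n p (w(i:=0)) t i"
proof -
  let ?H = "hatset n p (w(i:=0)) t i"
  have H1: "z \<in> ?H \<Longrightarrow> z i = 1" for z by (auto simp: hatset_def fixset_def)
  have "(\<lambda>x. x \<in> ?H \<and> (\<forall>y \<in> ?H. dotp n (w(i:=v)) x \<le> dotp n (w(i:=v)) y))
      = (\<lambda>x. x \<in> ?H \<and> (\<forall>y \<in> ?H. dotp n (w(i:=0)) x \<le> dotp n (w(i:=0)) y))"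
  proof (intro ext)
    fix x
    have "x \<in> ?H \<Longrightarrow> y \<in> ?H \<Longrightarrow> (dotp n (w(i:=v)) x \<le> dotp n (w(i:=v)) y) = (dotp n (w(i:=0)) x \<le> dotp n (w(i:=0)) y)" for y
      using dotp_upd[OF assms, of w v x] dotp_upd[OF assms, of w v y] H1[of x] H1[of y] by simp
    then show "(x \<in> ?H \<and> (\<forall>y \<in> ?H. dotp n (w(i:=v)) x \<le> dotp n (w(i:=v)) y))
      = (x \<in> ?H \<and> (\<forall>y \<in> ?H. dotp n (w(i:=0)) x \<le> dotp n (w(i:=0)) y))" by blast
  qed
  then show ?thesis unfolding xhat_def hatset_upd[OF assms, of p w v t] by simp
qed

lemma Lambda_upd:
  assumes "i < n" "Lambda n p (w(i:=v)) t i \<in> {0<..ereal e}"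
  shows "v \<in> {t - dotp n (w(i:=0)) (xhat n p (w(i:=0)) t i) <.. t - dotp n (w(i:=0)) (xhat n p (w(i:=0)) t i) + e}"
proof -
  have ne: "hatset n p (w(i:=0)) t i \<noteq> {}"
    using assms hatset_upd[OF assms(1), of p w v t] by (auto simp: Lambda_def split: if_splits)
  then have "xhat n p (w(i:=0)) t i \<in> hatset n p (w(i:=0)) t i"
    unfolding xhat_def
  proof -
    let ?H = "hatset n p (w(i:=0)) t i"
    have fin: "finite (dotp n (w(i:=0)) ` ?H)"
    proof -
      have "?H \<subseteq> {x. (\<forall>j<n. x j \<in> {0,1}) \<and> (\<forall>j\<ge>n. x j = 0)}"
        by (auto simp: hatset_def fixset_def binvecs_def)
      moreover have "finite {x::nat\<Rightarrow>real. (\<forall>j<n. x j \<in> {0,1}) \<and> (\<forall>j\<ge>n. x j = 0)}"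
      proof -
        have "{x::nat\<Rightarrow>real. (\<forall>j<n. x j \<in> {0,1}) \<and> (\<forall>j\<ge>n. x j = 0)} \<subseteq> {x. (\<forall>j. j \<notin> {..<n} \<longrightarrow> x j = 0) \<and> (\<forall>j. x j \<in> {0,1})}"
          by (auto simp: not_less) (metis not_less)
        moreover have "finite {x::nat\<Rightarrow>real. (\<forall>j. j \<notin> {..<n} \<longrightarrow> x j = 0) \<and> (\<forall>j. x j \<in> {0,1})}"
          by (rule rev_finite_subset[OF finite_set_of_finite_funs[of "{..<n}" "{0,1::real}" 0]]) auto
        ultimately show ?thesis by (rule finite_subset)
      qed
      ultimately show ?thesis by (meson finite_imageI finite_subset)
    qed
    obtain m where m: "m \<in> ?H" "\<forall>y\<in>?H. dotp n (w(i:=0)) m \<le> dotp n (w(i:=0)) y"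
    proof -
      let ?v = "Min (dotp n (w(i:=0)) ` ?H)"
      have "?v \<in> dotp n (w(i:=0)) ` ?H" using fin ne by (intro Min_in) auto
      then obtain m where "m \<in> ?H" "dotp n (w(i:=0)) m = ?v" by auto
      then show ?thesis using that fin by auto
    qed
    show "(SOME x. x \<in> ?H \<and> (\<forall>y\<in>?H. dotp n (w(i:=0)) x \<le> dotp n (w(i:=0)) y)) \<in> ?H"
      by (rule someI2[of _ m]) (use m in blast)+
  qed
  then have x1: "xhat n p (w(i:=0)) t i i = 1" by (auto simp: hatset_def fixset_def)
  have "Lambda n p (w(i:=v)) t i = ereal (dotp n (w(i:=0)) (xhat n p (w(i:=0)) t i) + v - t)"
    unfolding Lambda_def hatset_upd[OF assms(1), of p w v t] xhat_upd[OF assms(1), of p w v t]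
    using ne dotp_upd[OF assms(1), of w v] x1 by simp
  then show ?thesis using assms(2) by auto
qed


theorem lemma2p7:
  fixes n :: nat and \<phi> :: real and p a :: "nat \<Rightarrow> real" and t \<epsilon> :: real and i :: nat
  assumes "\<phi> \<ge> 1"
    and "\<forall>j<n. p j \<ge> 0"
    and "\<forall>j<n. 0 \<le> a j \<and> a j + 1 / \<phi> \<le> 1"
    and "t \<ge> 0"
    and "i < n"
    and "\<epsilon> \<ge> 0"
  shows "measure (PiM {..<n} (\<lambda>j. uniform_measure lborel {a j .. a j + 1 / \<phi>}))
           {w \<in> space (PiM {..<n} (\<lambda>j. uniform_measure lborel {a j .. a j + 1 / \<phi>})).
              Lambda n p w t i \<in> {0<..ereal \<epsilon>}}
         \<le> \<phi> * \<epsilon>"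
proof -
  define M where "M = (\<lambda>j. uniform_measure lborel {a j .. a j + 1 / \<phi>})"
  define S where "S = {w \<in> space (PiM {..<n} M). Lambda n p w t i \<in> {0<..ereal \<epsilon>}}"
  have L: "0 < 1 / \<phi>" using assms(1) by simp
  have pj: "prob_space (M j)" for j
    unfolding M_def using L by (intro prob_space_uniform_measure) auto
  interpret P: product_sigma_finite M
    unfolding product_sigma_finite_def using pj by (simp add: prob_space_imp_sigma_finite)
  have pe: "0 \<le> \<phi> * \<epsilon>" using assms(1,6) by simp
  have "measure (PiM {..<n} M) S \<le> \<phi> * \<epsilon>"
  proof (cases "S \<in> sets (PiM {..<n} M)")
    case False
    then show ?thesis using pe by (simp add: measure_notin_sets)
  next
    case True
    define I where "I = {..<n} - {i}"
    have II: "insert i I = {..<n}" "i \<notin> I" "finite I" using assms(5) by (auto simp: I_def)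
    have inner: "(\<integral>\<^sup>+ y. indicator S (x(i := y)) \<partial>(M i)) \<le> ennreal (\<phi> * \<epsilon>)" for x
    proof -
      define c where "c = t - dotp n (x(i:=0)) (xhat n p (x(i:=0)) t i)"
      define J where "J = {c <.. c + \<epsilon>}"
      have "(\<integral>\<^sup>+ y. indicator S (x(i := y)) \<partial>(M i)) \<le> (\<integral>\<^sup>+ y. indicator J y \<partial>(M i))"
      proof (rule nn_integral_mono)
        fix y
        show "indicator S (x(i := y)) \<le> (indicator J y :: ennreal)"
        proof (cases "x(i := y) \<in> S")
          case True
          then have "Lambda n p (x(i:=y)) t i \<in> {0<..ereal \<epsilon>}" by (simp add: S_def)
          from Lambda_upd[OF assms(5) this] have "y \<in> J" by (simp add: J_def c_def)
          then show ?thesis by (simp add: indicator_def)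
        qed simp
      qed
      also have "\<dots> = emeasure (M i) J" by (simp add: M_def J_def)
      also have "\<dots> = emeasure lborel ({a i .. a i + 1 / \<phi>} \<inter> J) / emeasure lborel {a i .. a i + 1 / \<phi>}"
        unfolding M_def by (simp add: J_def)
      also have "\<dots> \<le> emeasure lborel J / ennreal (1 / \<phi>)"
      proof -
        have "emeasure lborel {a i .. a i + 1 / \<phi>} = ennreal (1 / \<phi>)" using L by simp
        moreover have "emeasure lborel ({a i .. a i + 1 / \<phi>} \<inter> J) \<le> emeasure lborel J"
          by (rule emeasure_mono) (auto simp: J_def)
        ultimately show ?thesis by (simp add: divide_right_mono_ennreal)
      qed
      also have "\<dots> = ennreal \<epsilon> / ennreal (1 / \<phi>)" using assms(6) by (simp add: J_def)
      also have "\<dots> = ennreal (\<phi> * \<epsilon>)" using assms(6) L by (simp add: divide_ennreal)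
      finally show ?thesis .
    qed
    have "emeasure (PiM {..<n} M) S = (\<integral>\<^sup>+ w. indicator S w \<partial>(PiM {..<n} M))"
      using True by simp
    also have "\<dots> = (\<integral>\<^sup>+ x. (\<integral>\<^sup>+ y. indicator S (x(i := y)) \<partial>(M i)) \<partial>(PiM I M))"
      unfolding II(1)[symmetric] using True II
      by (intro P.product_nn_integral_insert) (auto simp: II(1))
    also have "\<dots> \<le> (\<integral>\<^sup>+ x. ennreal (\<phi> * \<epsilon>) \<partial>(PiM I M))"
      by (intro nn_integral_mono inner)
    also have "\<dots> = ennreal (\<phi> * \<epsilon>)"
    proof -
      interpret Q: prob_space "PiM I M" by (intro prob_space_PiM pj)
      show ?thesis by (simp add: Q.emeasure_space_1)
    qed
    finally have "emeasure (PiM {..<n} M) S \<le> ennreal (\<phi> * \<epsilon>)" .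
    then have "enn2real (emeasure (PiM {..<n} M) S) \<le> enn2real (ennreal (\<phi> * \<epsilon>))"
      by (intro enn2real_mono) auto
    then show ?thesis using pe by (simp add: measure_def)
  qed
  then show ?thesis unfolding S_def M_def .
qed

end
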